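(* Let $\mathcal{X}\subset\mathbb{R}^n$ be closed and convex, $\Xi\subset\mathbb{R}^m$ closed and convex, $\beta\in(0,1)$, $\varphi:\mathcal{X}\times\mathcal{X}\times\Xi\to\mathbb{R}$ bounded and continuous, and $\mathcal{Y}:\mathcal{X}\times\Xi\rightrightarrows\mathcal{X}$ nonempty-valued, compact-valued and continuous. Let $\xi_1,\ldots,\xi_N\in\Xi$ and $\mu_N=\frac1N\sum_{i=1}^N\xi_i$. Let $\mathcal{P}$ be a set of probability distributions on $\Xi$ such that $\mathbb{E}_Q[\boldsymbol{\xi}]=\mu_N$ for every $Q\in\mathcal{P}$ and the point mass $\delta_{\mu_N}\in\mathcal{P}$. If the MPC Bellman operator $B_{\mathrm{M}}$ is convexity preserving, then the DOO functional equation $$v_{\mathrm{O}}(x,\xi)=\inf_{y\in\mathcal{Y}(x,\xi)}\Bigl\{\varphi(x,y,\xi)+\beta\inf_{Q\in\mathcal{P}}\mathbb{E}_Q[v_{\mathrm{O}}(y,\boldsymbol{\xi})]\Bigr\}\quad\forall(x,\xi)\in\mathcal{X}\times\Xi$$ has a solution which is the same as the (unique bounded continuous) solution $v_{\mathrm{M}}$ of the MPC functional equation $$v_{\mathrm{M}}(x,\xi)=\inf_{y\in\mathcal{Y}(x,\xi)}\bigl\{\varphi(x,y,\xi)+\beta v_{\mathrm{M}}(y,\mu_N)\bigr\}\quad\forall(x,\xi)\in\mathcal{X}\times\Xi.$$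
   Context: $C_b(\mathcal{X}\times\Xi)$ denotes the Banach space of bounded continuous real-valued functions on $\mathcal{X}\times\Xi$ with the sup norm. The MPC Bellman operator $B_{\mathrm{M}}:C_b(\mathcal{X}\times\Xi)\to C_b(\mathcal{X}\times\Xi)$ is $B_{\mathrm{M}}(f)(x,\xi)=\inf_{y\in\mathcal{Y}(x,\xi)}\{\varphi(x,y,\xi)+\beta f(y,\mu_N)\}$. $B_{\mathrm{M}}$ is called convexity preserving if there exists a closed subset $\mathcal{F}\subset C_b(\mathcal{X}\times\Xi)$ such that $\xi\mapsto f(x,\xi)$ is convex for every $x\in\mathcal{X}$ and $f\in\mathcal{F}$, and $B_{\mathrm{M}}(\mathcal{F})\subset\mathcal{F}$. *)

theory Defs
  imports "HOL-Probability.Probability"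
begin

text \<open>Bounded continuous real functions on a set D, represented canonically
  by functions on the whole type that vanish outside D.\<close>
definition Cb :: "('p::metric_space) set \<Rightarrow> ('p \<Rightarrow> real) set" where
  "Cb D = {f. continuous_on D f \<and> bounded (f ` D) \<and> (\<forall>p. p \<notin> D \<longrightarrow> f p = 0)}"

definition closed_Cb :: "('p::metric_space) set \<Rightarrow> ('p \<Rightarrow> real) set \<Rightarrow> bool" where
  "closed_Cb D F \<longleftrightarrow> F \<subseteq> Cb D \<and>
     (\<forall>fs g. (\<forall>k. fs k \<in> F) \<and> g \<in> Cb D \<and> uniform_limit D fs g sequentially \<longrightarrow> g \<in> F)"

definition uhc_on :: "('p::metric_space) set \<Rightarrow> ('p \<Rightarrow> 'q::topological_space set) \<Rightarrow> bool" where
  "uhc_on D Y \<longleftrightarrow> (\<forall>p\<in>D. \<forall>U. open U \<and> Y p \<subseteq> U \<longrightarrow>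
      (\<exists>e>0. \<forall>q\<in>D. dist q p < e \<longrightarrow> Y q \<subseteq> U))"

definition lhc_on :: "('p::metric_space) set \<Rightarrow> ('p \<Rightarrow> 'q::topological_space set) \<Rightarrow> bool" where
  "lhc_on D Y \<longleftrightarrow> (\<forall>p\<in>D. \<forall>U. open U \<and> Y p \<inter> U \<noteq> {} \<longrightarrow>
      (\<exists>e>0. \<forall>q\<in>D. dist q p < e \<longrightarrow> Y q \<inter> U \<noteq> {}))"

definition continuous_corr_on :: "('p::metric_space) set \<Rightarrow> ('p \<Rightarrow> 'q::topological_space set) \<Rightarrow> bool" where
  "continuous_corr_on D Y \<longleftrightarrow> uhc_on D Y \<and> lhc_on D Y"

definition B_M :: "'a set \<Rightarrow> 'b set \<Rightarrow> ('a \<times> 'b \<Rightarrow> 'a set) \<Rightarrow> ('a \<times> 'a \<times> 'b \<Rightarrow> real)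
    \<Rightarrow> real \<Rightarrow> 'b \<Rightarrow> ('a \<times> 'b \<Rightarrow> real) \<Rightarrow> ('a \<times> 'b \<Rightarrow> real)" where
  "B_M X \<Xi> Y \<phi> \<beta> \<mu> f = (\<lambda>(x, \<xi>). if x \<in> X \<and> \<xi> \<in> \<Xi>
      then (INF y\<in>Y (x, \<xi>). \<phi> (x, y, \<xi>) + \<beta> * f (y, \<mu>)) else 0)"

definition convexity_preserving ::
  "('a::metric_space) set \<Rightarrow> ('b::real_normed_vector) set \<Rightarrow> ('a \<times> 'b \<Rightarrow> 'a set) \<Rightarrow> ('a \<times> 'a \<times> 'b \<Rightarrow> real)
    \<Rightarrow> real \<Rightarrow> 'b \<Rightarrow> bool" where
  "convexity_preserving X \<Xi> Y \<phi> \<beta> \<mu> \<longleftrightarrow>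
     (\<exists>F. F \<noteq> {} \<and> F \<subseteq> Cb (X \<times> \<Xi>) \<and> closed_Cb (X \<times> \<Xi>) F \<and>
        (\<forall>f\<in>F. \<forall>x\<in>X. convex_on \<Xi> (\<lambda>\<xi>. f (x, \<xi>))) \<and>
        B_M X \<Xi> Y \<phi> \<beta> \<mu> ` F \<subseteq> F)"

end

theory Submission imports Defs begin

lemma jensen_mean:
  fixes f :: "'b::euclidean_space \<Rightarrow> real" and Q :: "'b measure"
  assumes C: "closed C" "convex C" and f: "convex_on C f" "continuous_on C f"
    and Q: "prob_space Q" "measure Q C = 1" "integrable Q (\<lambda>x. x)" "integrable Q f"
      "(\<integral>x. x \<partial>Q) = m" and m: "m \<in> C"
  shows "f m \<le> (\<integral>x. f x \<partial>Q)"
proof (rule ccontr)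
  define I where "I = (\<integral>x. f x \<partial>Q)"
  assume "\<not> f m \<le> (\<integral>x. f x \<partial>Q)"
  hence lt: "I < f m" by (simp add: I_def)
  define E where "E = (C \<times> UNIV) \<inter> (\<lambda>p::'b\<times>real. f (fst p) - snd p) -` {..0}"
  have "continuous_on (C \<times> UNIV) (\<lambda>p::'b\<times>real. f (fst p) - snd p)"
    by (intro continuous_intros continuous_on_compose2[OF f(2)]) auto
  hence cE: "closed E" unfolding E_def
    by (intro continuous_closed_preimage) (auto intro: closed_Times C)
  have vE: "convex E"
  proof (rule convexI)
    fix p q :: "'b \<times> real" and u v :: real
    assume p: "p \<in> E" and q: "q \<in> E" and "0 \<le> u" "0 \<le> v" "u + v = 1"
    hence uv: "0 \<le> u \<and> 0 \<le> v \<and> u + v = 1" by simp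
    obtain x t where pp: "p = (x, t)" by fastforce
    obtain y s where qq: "q = (y, s)" by fastforce
    have h: "x \<in> C" "f x \<le> t" "y \<in> C" "f y \<le> s" using p q pp qq by (auto simp: E_def)
    have "u *\<^sub>R x + v *\<^sub>R y \<in> C" using C(2) h uv by (simp add: convex_def)
    moreover have "f (u *\<^sub>R x + v *\<^sub>R y) \<le> u * f x + v * f y"
    proof -
      have u: "u = 1 - v" using uv by simp
      show ?thesis using convex_onD[OF f(1), of v x y] h uv unfolding u
        by (simp add: algebra_simps)
    qed
    moreover have "u * f x + v * f y \<le> u * t + v * s"
      using h uv by (intro add_mono mult_left_mono) auto
    ultimately show "u *\<^sub>R p + v *\<^sub>R q \<in> E" by (simp add: pp qq E_def)
  qed
  have "(m, I) \<notin> E" using lt by (simp add: E_def)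
  then obtain a b where ab: "inner a (m, I) < b" "\<forall>p\<in>E. b < inner a p"
    using separating_hyperplane_closed_point[OF vE cE] by blast
  obtain a1 a2 where aa: "a = (a1, a2)" by fastforce
  have pt: "b < a1 \<bullet> x + a2 * f x" if "x \<in> C" for x
    using ab(2)[rule_format, of "(x, f x)"] that by (simp add: E_def aa)
  interpret prob_space Q by fact
  have ae: "AE x in Q. x \<in> C" using Q(2) by (intro AE_prob_1) simp
  have "(\<integral>x. b \<partial>Q) \<le> (\<integral>x. a1 \<bullet> x + a2 * f x \<partial>Q)"
    using ae Q(3,4) by (intro integral_mono_AE) (auto elim!: eventually_mono intro: less_imp_le pt)
  also have "\<dots> = a1 \<bullet> m + a2 * I"
    using Q(3,4,5) by (simp add: I_def)
  finally show False using ab(1) by (simp add: aa prob_space)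
qed

lemma INF_diff_le:
  fixes a b :: "'c \<Rightarrow> real"
  assumes S: "S \<noteq> {}" and ba: "bdd_below (a ` S)" and bb: "bdd_below (b ` S)"
    and d: "\<forall>s\<in>S. \<bar>a s - b s\<bar> \<le> d"
  shows "\<bar>(INF s\<in>S. a s) - (INF s\<in>S. b s)\<bar> \<le> d"
proof -
  have 1: "(INF s\<in>S. a s) - d \<le> (INF s\<in>S. b s)"
  proof (rule cINF_greatest[OF S])
    fix s assume s: "s \<in> S"
    have "(INF s\<in>S. a s) \<le> a s" by (rule cINF_lower[OF ba s])
    then show "(INF s\<in>S. a s) - d \<le> b s" using d s by force
  qed
  have 2: "(INF s\<in>S. b s) - d \<le> (INF s\<in>S. a s)"
  proof (rule cINF_greatest[OF S])
    fix s assume s: "s \<in> S"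
    have "(INF s\<in>S. b s) \<le> b s" by (rule cINF_lower[OF bb s])
    then show "(INF s\<in>S. b s) - d \<le> a s" using d s by force
  qed
  show ?thesis using 1 2 by linarith
qed

lemma contr:
  fixes \<phi> :: "'a \<times> 'a \<times> 'b \<Rightarrow> real" and f h :: "'a \<times> 'b \<Rightarrow> real"
  assumes Y: "\<forall>p\<in>X \<times> \<Xi>. Y p \<noteq> {} \<and> Y p \<subseteq> X" and \<mu>: "\<mu> \<in> \<Xi>"
    and \<phi>b: "bounded (\<phi> ` (X \<times> X \<times> \<Xi>))"
    and fb: "bounded (f ` (X \<times> \<Xi>))" and hb: "bounded (h ` (X \<times> \<Xi>))" and \<beta>: "0 \<le> \<beta>"
    and d: "\<forall>q\<in>X \<times> \<Xi>. \<bar>f q - h q\<bar> \<le> c" and x: "x \<in> X" "\<xi> \<in> \<Xi>"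
  shows "\<bar>(INF y\<in>Y (x, \<xi>). \<phi> (x, y, \<xi>) + \<beta> * f (y, \<mu>)) -
          (INF y\<in>Y (x, \<xi>). \<phi> (x, y, \<xi>) + \<beta> * h (y, \<mu>))\<bar> \<le> \<beta> * c"
proof (rule INF_diff_le)
  have YX: "Y (x, \<xi>) \<subseteq> X" using Y x by auto
  show "Y (x, \<xi>) \<noteq> {}" using Y x by auto
  obtain K where K: "\<forall>z\<in>X \<times> X \<times> \<Xi>. \<bar>\<phi> z\<bar> \<le> K" using \<phi>b unfolding bounded_real by blast
  obtain Kf where Kf: "\<forall>z\<in>X \<times> \<Xi>. \<bar>f z\<bar> \<le> Kf" using fb unfolding bounded_real by blast
  obtain Kh where Kh: "\<forall>z\<in>X \<times> \<Xi>. \<bar>h z\<bar> \<le> Kh" using hb unfolding bounded_real by blast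
  show "bdd_below ((\<lambda>y. \<phi> (x, y, \<xi>) + \<beta> * f (y, \<mu>)) ` Y (x, \<xi>))"
  proof (rule bdd_belowI2[where m="- K - \<beta> * Kf"])
    fix y assume "y \<in> Y (x, \<xi>)"
    hence y: "y \<in> X" using YX by auto
    have "- K \<le> \<phi> (x, y, \<xi>)" using K y x by force
    moreover have "\<beta> * (- Kf) \<le> \<beta> * f (y, \<mu>)" using Kf y \<mu> \<beta> by (intro mult_left_mono) force+
    ultimately show "- K - \<beta> * Kf \<le> \<phi> (x, y, \<xi>) + \<beta> * f (y, \<mu>)" by simp
  qed
  show "bdd_below ((\<lambda>y. \<phi> (x, y, \<xi>) + \<beta> * h (y, \<mu>)) ` Y (x, \<xi>))"
  proof (rule bdd_belowI2[where m="- K - \<beta> * Kh"])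
    fix y assume "y \<in> Y (x, \<xi>)"
    hence y: "y \<in> X" using YX by auto
    have "- K \<le> \<phi> (x, y, \<xi>)" using K y x by force
    moreover have "\<beta> * (- Kh) \<le> \<beta> * h (y, \<mu>)" using Kh y \<mu> \<beta> by (intro mult_left_mono) force+
    ultimately show "- K - \<beta> * Kh \<le> \<phi> (x, y, \<xi>) + \<beta> * h (y, \<mu>)" by simp
  qed
  show "\<forall>s\<in>Y (x, \<xi>). \<bar>\<phi> (x, s, \<xi>) + \<beta> * f (s, \<mu>) - (\<phi> (x, s, \<xi>) + \<beta> * h (s, \<mu>))\<bar> \<le> \<beta> * c"
  proof
    fix s assume "s \<in> Y (x, \<xi>)"
    hence s: "(s, \<mu>) \<in> X \<times> \<Xi>" using YX \<mu> by auto
    have "\<bar>\<phi> (x, s, \<xi>) + \<beta> * f (s, \<mu>) - (\<phi> (x, s, \<xi>) + \<beta> * h (s, \<mu>))\<bar> = \<beta> * \<bar>f (s, \<mu>) - h (s, \<mu>)\<bar>"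
    proof -
      have "\<phi> (x, s, \<xi>) + \<beta> * f (s, \<mu>) - (\<phi> (x, s, \<xi>) + \<beta> * h (s, \<mu>)) = \<beta> * (f (s, \<mu>) - h (s, \<mu>))"
        by (simp add: right_diff_distrib)
      then show ?thesis using \<beta> by (simp add: abs_mult)
    qed
    also have "\<dots> \<le> \<beta> * c" using d s \<beta> by (intro mult_left_mono) auto
    finally show "\<bar>\<phi> (x, s, \<xi>) + \<beta> * f (s, \<mu>) - (\<phi> (x, s, \<xi>) + \<beta> * h (s, \<mu>))\<bar> \<le> \<beta> * c" .
  qed
qed

theorem corollary1:
  fixes X :: "'a::euclidean_space set" and \<Xi> :: "'b::euclidean_space set"
    and \<beta> :: real and \<phi> :: "'a \<times> 'a \<times> 'b \<Rightarrow> real" and Y :: "'a \<times> 'b \<Rightarrow> 'a set"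
    and N :: nat and \<xi>s :: "nat \<Rightarrow> 'b" and \<mu> :: 'b and \<P> :: "'b measure set"
  assumes X: "closed X" "convex X"
    and \<Xi>: "closed \<Xi>" "convex \<Xi>"
    and \<beta>: "0 < \<beta>" "\<beta> < 1"
    and \<phi>: "continuous_on (X \<times> X \<times> \<Xi>) \<phi>" "bounded (\<phi> ` (X \<times> X \<times> \<Xi>))"
    and Y: "\<forall>p\<in>X \<times> \<Xi>. Y p \<noteq> {} \<and> compact (Y p) \<and> Y p \<subseteq> X"
      "continuous_corr_on (X \<times> \<Xi>) Y"
    and N: "N \<ge> 1" "\<forall>i\<in>{1..N}. \<xi>s i \<in> \<Xi>"
    and \<mu>: "\<mu> = inverse (real N) *\<^sub>R (\<Sum>i=1..N. \<xi>s i)"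
    and \<P>: "\<forall>Q\<in>\<P>. prob_space Q \<and> sets Q = sets borel \<and> measure Q \<Xi> = 1 \<and>
              integrable Q (\<lambda>\<xi>. \<xi>) \<and> (\<integral>\<xi>. \<xi> \<partial>Q) = \<mu>"
      "return borel \<mu> \<in> \<P>"
    and cp: "convexity_preserving X \<Xi> Y \<phi> \<beta> \<mu>"
  shows "\<exists>v. continuous_on (X \<times> \<Xi>) v \<and> bounded (v ` (X \<times> \<Xi>)) \<and>
           (\<forall>p. p \<notin> X \<times> \<Xi> \<longrightarrow> v p = 0) \<and>
           (\<forall>x\<in>X. \<forall>\<xi>\<in>\<Xi>. v (x, \<xi>) = (INF y\<in>Y (x, \<xi>). \<phi> (x, y, \<xi>) + \<beta> * v (y, \<mu>))) \<and>
           (\<forall>x\<in>X. \<forall>\<xi>\<in>\<Xi>. v (x, \<xi>) =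
               (INF y\<in>Y (x, \<xi>). \<phi> (x, y, \<xi>) + \<beta> * (INF Q\<in>\<P>. \<integral>\<zeta>. v (y, \<zeta>) \<partial>Q))) \<and>
           (\<forall>w. continuous_on (X \<times> \<Xi>) w \<and> bounded (w ` (X \<times> \<Xi>)) \<and>
                (\<forall>x\<in>X. \<forall>\<xi>\<in>\<Xi>. w (x, \<xi>) = (INF y\<in>Y (x, \<xi>). \<phi> (x, y, \<xi>) + \<beta> * w (y, \<mu>)))
                \<longrightarrow> (\<forall>p\<in>X \<times> \<Xi>. w p = v p))"
proof -
  let ?B = "B_M X \<Xi> Y \<phi> \<beta> \<mu>"
  have Bdef: "?B f (x, \<xi>) = (if x \<in> X \<and> \<xi> \<in> \<Xi> then (INF y\<in>Y (x, \<xi>). \<phi> (x, y, \<xi>) + \<beta> * f (y, \<mu>)) else 0)"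
    for f x \<xi> by (simp add: B_M_def)
  obtain F where F: "F \<noteq> {}" "F \<subseteq> Cb (X \<times> \<Xi>)" "closed_Cb (X \<times> \<Xi>) F"
    "\<forall>f\<in>F. \<forall>x\<in>X. convex_on \<Xi> (\<lambda>\<xi>. f (x, \<xi>))" "?B ` F \<subseteq> F"
    using cp unfolding convexity_preserving_def by blast
  have \<Xi>b: "\<Xi> \<in> sets borel" using \<Xi>(1) by simp
  have "measure (return borel \<mu>) \<Xi> = 1" using \<P> by blast
  hence \<mu>\<Xi>: "\<mu> \<in> \<Xi>" using measure_return[OF \<Xi>b, of \<mu>] by (auto split: split_indicator_asm)
  have Yp: "\<forall>p\<in>X \<times> \<Xi>. Y p \<noteq> {} \<and> Y p \<subseteq> X" using Y(1) by blast
  have \<beta>0: "0 \<le> \<beta>" using \<beta> by simp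
  note contr' = contr[OF Yp \<mu>\<Xi> \<phi>(2) _ _ \<beta>0]
  obtain f0 where f0: "f0 \<in> F" using F(1) by blast
  define fs where "fs n = (?B ^^ n) f0" for n
  have fsS: "fs (Suc n) = ?B (fs n)" for n by (simp add: fs_def)
  have fsF: "fs n \<in> F" for n
    by (induction n) (use f0 F(5) in \<open>auto simp: fs_def\<close>)
  have fsCb: "fs n \<in> Cb (X \<times> \<Xi>)" for n using fsF F(2) by blast
  have fsb: "bounded (fs n ` (X \<times> \<Xi>))" for n using fsCb[of n] by (simp add: Cb_def)
  have fsc: "continuous_on (X \<times> \<Xi>) (fs n)" for n using fsCb[of n] by (simp add: Cb_def)
  have fsz: "p \<notin> X \<times> \<Xi> \<Longrightarrow> fs n p = 0" for n p using fsCb[of n] by (cases p) (auto simp: Cb_def)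
  obtain a1 where a1: "\<forall>q\<in>X \<times> \<Xi>. \<bar>fs 1 q\<bar> \<le> a1" using fsb[of 1] unfolding bounded_real by blast
  obtain a0 where a0: "\<forall>q\<in>X \<times> \<Xi>. \<bar>fs 0 q\<bar> \<le> a0" using fsb[of 0] unfolding bounded_real by blast
  define D where "D = \<bar>a1\<bar> + \<bar>a0\<bar>"
  have D: "\<bar>fs 1 q - fs 0 q\<bar> \<le> D" for q
  proof (cases "q \<in> X \<times> \<Xi>")
    case True thus ?thesis using a1 a0 unfolding D_def by force
  next
    case False thus ?thesis using fsz[of q] unfolding D_def by simp
  qed
  have D0: "0 \<le> D" unfolding D_def by simp
  have step: "\<bar>fs (Suc n) q - fs n q\<bar> \<le> \<beta> ^ n * D" for n q
  proof (induction n arbitrary: q)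
    case 0 show ?case using D by simp
  next
    case (Suc n)
    show ?case
    proof (cases "q \<in> X \<times> \<Xi>")
      case True
      then obtain x \<xi> where q: "q = (x, \<xi>)" "x \<in> X" "\<xi> \<in> \<Xi>" by auto
      have e1: "fs (Suc (Suc n)) q = (INF y\<in>Y (x, \<xi>). \<phi> (x, y, \<xi>) + \<beta> * fs (Suc n) (y, \<mu>))"
        by (subst fsS) (simp add: Bdef q)
      have e2: "fs (Suc n) q = (INF y\<in>Y (x, \<xi>). \<phi> (x, y, \<xi>) + \<beta> * fs n (y, \<mu>))"
        by (subst fsS) (simp add: Bdef q)
      have "\<bar>fs (Suc (Suc n)) q - fs (Suc n) q\<bar> \<le> \<beta> * (\<beta> ^ n * D)"
        unfolding e1 e2 by (rule contr'[OF fsb fsb _ q(2,3)]) (use Suc.IH in blast)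
      thus ?thesis by simp
    next
      case False thus ?thesis using fsz[OF False] D0 \<beta>0 by simp
    qed
  qed
  have ul0: "uniform_limit UNIV (\<lambda>n x. \<Sum>i<n. fs (Suc i) x - fs i x)
      (\<lambda>x. suminf (\<lambda>i. fs (Suc i) x - fs i x)) sequentially"
    by (rule Weierstrass_m_test[where M="\<lambda>n. \<beta> ^ n * D"])
      (use step \<beta> in \<open>auto intro: summable_mult2 summable_geometric\<close>)
  define g where "g x = fs 0 x + suminf (\<lambda>i. fs (Suc i) x - fs i x)" for x
  have ul: "uniform_limit UNIV fs g sequentially"
  proof -
    have tel: "(\<lambda>a b. fs 0 b + (\<Sum>i<a. fs (Suc i) b - fs i b)) = fs"
    proof (intro ext)
      fix a b
      show "fs 0 b + (\<Sum>i<a. fs (Suc i) b - fs i b) = fs a b"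
        using sum_lessThan_telescope[of "\<lambda>i. fs i b" a] by simp
    qed
    have "(\<lambda>a. fs 0 a + (\<Sum>i. fs (Suc i) a - fs i a)) = g" by (simp add: g_def fun_eq_iff)
    with tel show ?thesis
      using uniform_limit_add[OF uniform_limit_const[where S=UNIV and c="fs 0"] ul0] by simp
  qed
  have ulX: "uniform_limit (X \<times> \<Xi>) fs g sequentially"
    by (rule uniform_limit_on_subset[OF ul]) simp
  have gc: "continuous_on (X \<times> \<Xi>) g"
    by (rule uniform_limit_theorem[OF always_eventually ulX]) (use fsc in auto)
  have gz: "g p = 0" if "p \<notin> X \<times> \<Xi>" for p
  proof -
    have "(\<lambda>n. fs n p) \<longlonglongrightarrow> g p" using tendsto_uniform_limitI[OF ul] by simp
    moreover have "(\<lambda>n. fs n p) \<longlonglongrightarrow> 0" using fsz[OF that] by simp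
    ultimately show ?thesis using LIMSEQ_unique by blast
  qed
  have gb: "bounded (g ` (X \<times> \<Xi>))"
  proof -
    obtain N where N: "\<forall>n\<ge>N. \<forall>x\<in>UNIV. dist (fs n x) (g x) < 1"
      using uniform_limitD[OF ul, of 1] unfolding eventually_sequentially by auto
    obtain a where a: "\<forall>q\<in>X \<times> \<Xi>. \<bar>fs N q\<bar> \<le> a" using fsb[of N] unfolding bounded_real by blast
    have "\<bar>g q\<bar> \<le> a + 1" if "q \<in> X \<times> \<Xi>" for q
    proof -
      have "\<bar>fs N q - g q\<bar> < 1" using N[rule_format, of N q] by (simp add: dist_real_def)
      moreover have "\<bar>fs N q\<bar> \<le> a" using a that by blast
      ultimately show ?thesis by linarith
    qed
    thus ?thesis unfolding bounded_real by blast
  qed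
  have gCb: "g \<in> Cb (X \<times> \<Xi>)" using gc gb gz by (auto simp: Cb_def)
  have gF: "g \<in> F" using F(3) fsF gCb ulX unfolding closed_Cb_def by blast
  have gfix: "g (x, \<xi>) = (INF y\<in>Y (x, \<xi>). \<phi> (x, y, \<xi>) + \<beta> * g (y, \<mu>))"
    if x: "x \<in> X" "\<xi> \<in> \<Xi>" for x \<xi>
  proof -
    let ?p = "(x, \<xi>)"
    have "(\<lambda>n. fs (Suc n) ?p) \<longlonglongrightarrow> (INF y\<in>Y (x, \<xi>). \<phi> (x, y, \<xi>) + \<beta> * g (y, \<mu>))"
    proof (rule LIMSEQ_I)
      fix r :: real assume r: "0 < r"
      obtain no where no: "\<forall>n\<ge>no. \<forall>q\<in>X \<times> \<Xi>. dist (fs n q) (g q) < r / 2"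
        using uniform_limitD[OF ulX, of "r/2"] r unfolding eventually_sequentially by auto
      have "norm (fs (Suc n) ?p - (INF y\<in>Y (x, \<xi>). \<phi> (x, y, \<xi>) + \<beta> * g (y, \<mu>))) < r"
        if n: "n \<ge> no" for n
      proof -
        have "fs (Suc n) ?p = (INF y\<in>Y (x, \<xi>). \<phi> (x, y, \<xi>) + \<beta> * fs n (y, \<mu>))"
          by (subst fsS) (simp add: Bdef x)
        moreover have "\<bar>(INF y\<in>Y (x, \<xi>). \<phi> (x, y, \<xi>) + \<beta> * fs n (y, \<mu>)) -
             (INF y\<in>Y (x, \<xi>). \<phi> (x, y, \<xi>) + \<beta> * g (y, \<mu>))\<bar> \<le> \<beta> * (r / 2)"
        proof (rule contr'[OF fsb gb _ x])
          show "\<forall>q\<in>X \<times> \<Xi>. \<bar>fs n q - g q\<bar> \<le> r / 2"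
          proof
            fix q assume "q \<in> X \<times> \<Xi>"
            hence "dist (fs n q) (g q) < r / 2" using no n by blast
            thus "\<bar>fs n q - g q\<bar> \<le> r / 2" by (simp add: dist_real_def)
          qed
        qed
        moreover have "\<beta> * (r / 2) < r"
        proof -
          have "\<beta> * (r / 2) \<le> 1 * (r / 2)" using \<beta> r by (intro mult_right_mono) auto
          thus ?thesis using r by linarith
        qed
        ultimately show ?thesis unfolding real_norm_def by linarith
      qed
      thus "\<exists>no. \<forall>n\<ge>no. norm (fs (Suc n) ?p - (INF y\<in>Y (x, \<xi>). \<phi> (x, y, \<xi>) + \<beta> * g (y, \<mu>))) < r"
        by blast
    qed
    moreover have "(\<lambda>n. fs (Suc n) ?p) \<longlonglongrightarrow> g ?p"
      using LIMSEQ_Suc[OF tendsto_uniform_limitI[OF ul, of ?p]] by simp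
    ultimately have "(INF y\<in>Y (x, \<xi>). \<phi> (x, y, \<xi>) + \<beta> * g (y, \<mu>)) = g ?p" by (rule LIMSEQ_unique)
    thus ?thesis by simp
  qed
  have key: "(INF Q\<in>\<P>. \<integral>\<zeta>. g (y, \<zeta>) \<partial>Q) = g (y, \<mu>)" if y: "y \<in> X" for y
  proof -
    let ?h = "\<lambda>\<zeta>. g (y, \<zeta>)"
    have hc: "continuous_on \<Xi> ?h"
      by (rule continuous_on_compose2[OF gc, of \<Xi> "\<lambda>\<zeta>. (y, \<zeta>)"]) (use y in \<open>auto intro!: continuous_intros\<close>)
    have hv: "convex_on \<Xi> ?h" using F(4) gF y by blast
    have "(\<lambda>\<zeta>. indicator \<Xi> \<zeta> *\<^sub>R ?h \<zeta>) \<in> borel_measurable borel"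
      by (rule borel_measurable_continuous_on_indicator[OF \<Xi>b hc])
    moreover have "(\<lambda>\<zeta>. indicator \<Xi> \<zeta> *\<^sub>R ?h \<zeta>) = ?h"
    proof (rule ext)
      fix \<zeta>
      show "indicator \<Xi> \<zeta> *\<^sub>R ?h \<zeta> = ?h \<zeta>"
        using gz[of "(y, \<zeta>)"] y by (cases "\<zeta> \<in> \<Xi>") auto
    qed
    ultimately have hm: "?h \<in> borel_measurable borel" by simp
    obtain a where a: "\<forall>q\<in>X \<times> \<Xi>. \<bar>g q\<bar> \<le> a" using gb unfolding bounded_real by blast
    have ha: "\<bar>?h \<zeta>\<bar> \<le> \<bar>a\<bar>" for \<zeta>
      using a gz[of "(y, \<zeta>)"] y by (cases "\<zeta> \<in> \<Xi>") force+
    have ge: "g (y, \<mu>) \<le> (\<integral>\<zeta>. ?h \<zeta> \<partial>Q)" if Q: "Q \<in> \<P>" for Q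
    proof -
      have Qp: "prob_space Q" "sets Q = sets borel" "measure Q \<Xi> = 1"
        "integrable Q (\<lambda>\<xi>. \<xi>)" "(\<integral>\<xi>. \<xi> \<partial>Q) = \<mu>" using \<P>(1) Q by auto
      have hmQ: "?h \<in> borel_measurable Q" using hm measurable_cong_sets[OF Qp(2) refl] by blast
      have hi: "integrable Q ?h"
        using prob_space.finite_measure[OF Qp(1)] hmQ ha
        by (intro finite_measure.integrable_const_bound[where B="\<bar>a\<bar>"]) auto
      show ?thesis by (rule jensen_mean[OF \<Xi> hv hc Qp(1,3,4) hi Qp(5) \<mu>\<Xi>])
    qed
    have ret: "(\<integral>\<zeta>. ?h \<zeta> \<partial>return borel \<mu>) = g (y, \<mu>)"
      by (rule integral_return) (use hm in auto)
    show ?thesis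
    proof (rule antisym)
      show "(INF Q\<in>\<P>. \<integral>\<zeta>. g (y, \<zeta>) \<partial>Q) \<le> g (y, \<mu>)"
        using cINF_lower[OF bdd_belowI2[where m="g (y, \<mu>)"] \<P>(2), of "\<lambda>Q. \<integral>\<zeta>. g (y, \<zeta>) \<partial>Q"] ge ret
        by simp
      show "g (y, \<mu>) \<le> (INF Q\<in>\<P>. \<integral>\<zeta>. g (y, \<zeta>) \<partial>Q)"
        using \<P>(2) ge by (intro cINF_greatest) auto
    qed
  qed
  have uniq: "\<forall>p\<in>X \<times> \<Xi>. w p = g p"
    if w: "continuous_on (X \<times> \<Xi>) w" "bounded (w ` (X \<times> \<Xi>))"
      "\<forall>x\<in>X. \<forall>\<xi>\<in>\<Xi>. w (x, \<xi>) = (INF y\<in>Y (x, \<xi>). \<phi> (x, y, \<xi>) + \<beta> * w (y, \<mu>))" for w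
  proof -
    obtain aw where aw: "\<forall>q\<in>X \<times> \<Xi>. \<bar>w q\<bar> \<le> aw" using w(2) unfolding bounded_real by blast
    obtain ag where ag: "\<forall>q\<in>X \<times> \<Xi>. \<bar>g q\<bar> \<le> ag" using gb unfolding bounded_real by blast
    have it: "\<forall>q\<in>X \<times> \<Xi>. \<bar>w q - g q\<bar> \<le> \<beta> ^ n * (aw + ag)" for n
    proof (induction n)
      case 0 show ?case using aw ag by force
    next
      case (Suc n)
      show ?case
      proof
        fix q assume "q \<in> X \<times> \<Xi>"
        then obtain x \<xi> where q: "q = (x, \<xi>)" "x \<in> X" "\<xi> \<in> \<Xi>" by auto
        have "\<bar>w q - g q\<bar> \<le> \<beta> * (\<beta> ^ n * (aw + ag))"
          unfolding q using w(3) gfix[OF q(2,3)] contr'[OF w(2) gb Suc.IH q(2,3)] q by simp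
        thus "\<bar>w q - g q\<bar> \<le> \<beta> ^ Suc n * (aw + ag)" by simp
      qed
    qed
    show ?thesis
    proof
      fix q assume q: "q \<in> X \<times> \<Xi>"
      have "(\<lambda>n. \<beta> ^ n * (aw + ag)) \<longlonglongrightarrow> 0 * (aw + ag)"
        using \<beta> by (intro tendsto_mult LIMSEQ_power_zero tendsto_const) auto
      hence "\<bar>w q - g q\<bar> \<le> 0"
        using it q by (intro tendsto_le[OF trivial_limit_sequentially, of "\<lambda>n. \<beta> ^ n * (aw + ag)" 0 "\<lambda>n. \<bar>w q - g q\<bar>"]) auto
      thus "w q = g q" by simp
    qed
  qed
  show ?thesis
  proof (intro exI[of _ g] conjI)
    show "continuous_on (X \<times> \<Xi>) g" by fact
    show "bounded (g ` (X \<times> \<Xi>))" by fact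
    show "\<forall>p. p \<notin> X \<times> \<Xi> \<longrightarrow> g p = 0" using gz by blast
    show "\<forall>x\<in>X. \<forall>\<xi>\<in>\<Xi>. g (x, \<xi>) = (INF y\<in>Y (x, \<xi>). \<phi> (x, y, \<xi>) + \<beta> * g (y, \<mu>))"
      using gfix by blast
    show "\<forall>x\<in>X. \<forall>\<xi>\<in>\<Xi>. g (x, \<xi>) =
               (INF y\<in>Y (x, \<xi>). \<phi> (x, y, \<xi>) + \<beta> * (INF Q\<in>\<P>. \<integral>\<zeta>. g (y, \<zeta>) \<partial>Q))"
    proof (intro ballI)
      fix x \<xi> assume x: "x \<in> X" "\<xi> \<in> \<Xi>"
      have "(INF y\<in>Y (x, \<xi>). \<phi> (x, y, \<xi>) + \<beta> * (INF Q\<in>\<P>. \<integral>\<zeta>. g (y, \<zeta>) \<partial>Q))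
          = (INF y\<in>Y (x, \<xi>). \<phi> (x, y, \<xi>) + \<beta> * g (y, \<mu>))"
        using Yp x key by (intro INF_cong refl) auto
      thus "g (x, \<xi>) = (INF y\<in>Y (x, \<xi>). \<phi> (x, y, \<xi>) + \<beta> * (INF Q\<in>\<P>. \<integral>\<zeta>. g (y, \<zeta>) \<partial>Q))"
        using gfix[OF x] by simp
    qed
    show "\<forall>w. continuous_on (X \<times> \<Xi>) w \<and> bounded (w ` (X \<times> \<Xi>)) \<and>
                (\<forall>x\<in>X. \<forall>\<xi>\<in>\<Xi>. w (x, \<xi>) = (INF y\<in>Y (x, \<xi>). \<phi> (x, y, \<xi>) + \<beta> * w (y, \<mu>)))
                \<longrightarrow> (\<forall>p\<in>X \<times> \<Xi>. w p = g p)"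
      using uniq by blast
  qed
qed

end
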